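(* Assume the setting of the context (in particular $\mathcal{R}(\bar{\mathbf{Y}}_{II})\succ\mathbf{0}$). Let $Y_0>0$, let $\mathbf{B}_I\in\mathbb{R}^{N_I\times N_I}$ be symmetric, and set $\mathbf{Y}_I=\mathrm{i}\mathbf{B}_I$. Define $$\mathbf{H}=\left(\mathbf{Y}_R+\mathbf{Y}_{RR}\right)^{-1}\Big(-\mathbf{Y}_{RT}+\mathbf{Y}_{RI}\big(\mathbf{Y}_I+\bar{\mathbf{Y}}_{II}\big)^{-1}\big(\mathbf{Y}_{IT}-\mathbf{Y}_{IR}(\mathbf{Y}_R+\mathbf{Y}_{RR})^{-1}\mathbf{Y}_{RT}\big)\Big).$$ (All inverses here exist.) Define $$\bar{\mathbf{B}}_I=Y_0\,\mathcal{R}(\bar{\mathbf{Y}}_{II})^{-1/2}\big(\mathbf{B}_I+\mathcal{I}(\bar{\mathbf{Y}}_{II})\big)\mathcal{R}(\bar{\mathbf{Y}}_{II})^{-1/2},\qquad \bar{\boldsymbol{\Theta}}=(Y_0\mathbf{I}+\mathrm{i}\bar{\mathbf{B}}_I)^{-1}(Y_0\mathbf{I}-\mathrm{i}\bar{\mathbf{B}}_I),$$ $$\bar{\mathbf{Y}}_{RT}=2Y_0(\mathbf{Y}_R+\mathbf{Y}_{RR})^{-1}\mathbf{Y}_{RT},\quad \bar{\mathbf{Y}}_{RI}=\sqrt2\,Y_0(\mathbf{Y}_R+\mathbf{Y}_{RR})^{-1}\mathbf{Y}_{RI}\mathcal{R}(\bar{\mathbf{Y}}_{II})^{-1/2},$$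 $$\bar{\mathbf{Y}}_{IT}=\sqrt2\,Y_0\,\mathcal{R}(\bar{\mathbf{Y}}_{II})^{-1/2}\big(\mathbf{Y}_{IT}-\mathbf{Y}_{IR}(\mathbf{Y}_R+\mathbf{Y}_{RR})^{-1}\mathbf{Y}_{RT}\big),$$ $$\bar{\mathbf{H}}_{RT}=-\tfrac{1}{2Y_0}\Big(\bar{\mathbf{Y}}_{RT}-\tfrac{1}{2Y_0}\bar{\mathbf{Y}}_{RI}\bar{\mathbf{Y}}_{IT}\Big),\quad \bar{\mathbf{H}}_{RI}=-\tfrac{1}{2Y_0}\bar{\mathbf{Y}}_{RI},\quad \bar{\mathbf{H}}_{IT}=-\tfrac{1}{2Y_0}\bar{\mathbf{Y}}_{IT}.$$ Then $\mathbf{H}=\bar{\mathbf{H}}_{RT}+\bar{\mathbf{H}}_{RI}\bar{\boldsymbol{\Theta}}\bar{\mathbf{H}}_{IT}$.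
   Context: Setting: $N_T,N_I,N_R$ positive integers, $N=N_T+N_I+N_R$; $\mathbf{Y}\in\mathbb{C}^{N\times N}$ complex symmetric with $\mathcal{R}(\mathbf{Y})$ positive definite, partitioned into blocks $\mathbf{Y}_{ab}\in\mathbb{C}^{N_a\times N_b}$, $a,b\in\{T,I,R\}$; $\mathbf{Y}_R\in\mathbb{R}^{N_R\times N_R}$ diagonal with positive diagonal entries; $\bar{\mathbf{Y}}_{II}:=\mathbf{Y}_{II}-\mathbf{Y}_{IR}(\mathbf{Y}_{RR}+\mathbf{Y}_R)^{-1}\mathbf{Y}_{RI}$. $\mathcal{R}(\cdot),\mathcal{I}(\cdot)$ denote entrywise real and imaginary parts; for a real symmetric positive definite $\mathbf{P}$, $\mathbf{P}^{-1/2}$ is the inverse of its unique positive definite square root. $\mathsf{i}$ is the imaginary unit. *)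

theory Defs
  imports "HOL-Analysis.Analysis"
begin

definition blk :: "('i \<Rightarrow> 'n) \<Rightarrow> ('j \<Rightarrow> 'n) \<Rightarrow> 'a^'n^'n \<Rightarrow> 'a^'j^'i" where
  "blk f g Y = (\<chi> a b. Y $ (f a) $ (g b))"

text \<open>Index embeddings for N = N_T + N_I + N_R.\<close>
definition idxT :: "'t \<Rightarrow> ('t + 'i) + 'r" where "idxT = Inl \<circ> Inl"
definition idxI :: "'i \<Rightarrow> ('t + 'i) + 'r" where "idxI = Inl \<circ> Inr"
definition idxR :: "'r \<Rightarrow> ('t + 'i) + 'r" where "idxR = Inr"

definition cRe :: "complex^'n^'m \<Rightarrow> real^'n^'m" where
  "cRe M = (\<chi> i j. Re (M $ i $ j))"
definition cIm :: "complex^'n^'m \<Rightarrow> real^'n^'m" where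
  "cIm M = (\<chi> i j. Im (M $ i $ j))"
definition cmat :: "real^'n^'m \<Rightarrow> complex^'n^'m" where
  "cmat M = (\<chi> i j. complex_of_real (M $ i $ j))"
definition csc :: "complex \<Rightarrow> complex^'n^'m \<Rightarrow> complex^'n^'m" where
  "csc c M = (\<chi> i j. c * M $ i $ j)"

definition rpd :: "real^'n^'n \<Rightarrow> bool" where
  "rpd P \<longleftrightarrow> transpose P = P \<and> (\<forall>x::real^'n. x \<noteq> 0 \<longrightarrow> x \<bullet> (P *v x) > 0)"

definition msqrt :: "real^'n^'n \<Rightarrow> real^'n^'n" where
  "msqrt P = (THE S. rpd S \<and> S ** S = P)"
definition inv_sqrt :: "real^'n^'n \<Rightarrow> real^'n^'n" where
  "inv_sqrt P = matrix_inv (msqrt P)"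

end

theory Submission
  imports Defs
begin


lemma sym_inner:
  fixes P :: "real^'n^'n"
  assumes "transpose P = P"
  shows "(P *v x) \<bullet> y = x \<bullet> (P *v y)"
  by (metis assms dot_lmul_matrix vector_transpose_matrix)

lemma mv_scale: "(P::real^'n^'m) *v (c *\<^sub>R x) = c *\<^sub>R (P *v x)"
  by (simp add: linear_scale)

lemma mv_add: "(P::real^'n^'m) *v (x + y) = P *v x + P *v y"
  by (simp add: matrix_vector_right_distrib)

lemma mv_diff: "(P::real^'n^'m) *v (x - y) = P *v x - P *v y"
  by (simp add: linear_diff)

lemma cont_q: "continuous_on K (\<lambda>x. x \<bullet> ((P::real^'n^'n) *v x))"
  by (intro continuous_intros linear_continuous_on linear_conv_bounded_linear[THEN iffD1] matrix_vector_mul_linear)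

lemma quad_lemma:
  fixes c d :: real
  assumes "\<And>t. 2 * t * c \<le> t^2 * d" "c \<ge> 0" "d \<ge> 0"
  shows "c = 0"
proof (rule ccontr)
  assume "c \<noteq> 0"
  hence cp: "c > 0" using assms by auto
  define t where "t = c / (d + 1)"
  have tp: "t > 0" using cp assms by (simp add: t_def)
  have "2 * t * c \<le> t^2 * d" by (rule assms(1))
  hence "2 * c \<le> t * d" using tp by (simp add: power2_eq_square)
  moreover have "t * d < c" using cp assms(3) unfolding t_def by (simp add: field_simps)
  ultimately show False using cp by linarith
qed

lemma eigen_basis_sub:
  fixes P :: "real^'n^'n"
  assumes sym: "transpose P = P"
  shows "subspace V \<Longrightarrow> (\<forall>x\<in>V. P *v x \<in> V) \<Longrightarrow> \<exists>B. B \<subseteq> V \<and> pairwise orthogonal B \<and>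
     (\<forall>b\<in>B. norm b = 1) \<and> (\<forall>b\<in>B. P *v b = (b \<bullet> (P *v b)) *\<^sub>R b) \<and> span B = V"
proof (induction "dim V" arbitrary: V rule: less_induct)
  case less
  note sV = less.prems(1) and inv = less.prems(2)
  show ?case
  proof (cases "V = {0}")
    case True then show ?thesis by (intro exI[of _ "{}"]) auto
  next
    case False
    define q where "q x = x \<bullet> (P *v x)" for x
    define K where "K = V \<inter> sphere 0 1"
    have "compact K" unfolding K_def using closed_subspace[OF sV] compact_sphere by blast
    obtain x0 where x0: "x0 \<in> V" "x0 \<noteq> 0" using False sV subspace_0 by blast
    have "x0 /\<^sub>R norm x0 \<in> K" unfolding K_def using x0 sV by (simp add: subspace_scale)
    hence "K \<noteq> {}" by blast
    have "continuous_on K q" unfolding q_def by (rule cont_q)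
    then obtain v where vK: "v \<in> K" and vmax: "\<forall>y\<in>K. q y \<le> q v"
      using continuous_attains_sup[OF \<open>compact K\<close> \<open>K \<noteq> {}\<close>] by blast
    have vV: "v \<in> V" and nv: "norm v = 1" using vK by (auto simp: K_def)
    have vv: "v \<bullet> v = 1" using nv by (simp add: dot_square_norm)
    define l where "l = q v"
    have qscale: "q (c *\<^sub>R x) = c^2 * q x" for c x
      by (simp add: q_def mv_scale power2_eq_square)
    have bound: "q x \<le> l * (x \<bullet> x)" if "x \<in> V" for x
    proof (cases "x = 0")
      case True then show ?thesis by (simp add: q_def)
    next
      case False
      have "(1 / norm x) *\<^sub>R x \<in> K" unfolding K_def using that False sV by (simp add: subspace_scale)
      hence "q ((1 / norm x) *\<^sub>R x) \<le> l" using vmax l_def by blast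
      hence "(1/norm x)^2 * q x \<le> l" by (simp add: qscale)
      hence "q x \<le> l * (norm x)^2" using False by (simp add: field_simps power2_eq_square)
      then show ?thesis by (simp add: dot_square_norm)
    qed
    define w where "w = P *v v - l *\<^sub>R v"
    have wV: "w \<in> V" unfolding w_def using inv vV sV by (simp add: subspace_diff subspace_scale)
    have ineq: "2 * t * (w \<bullet> w) \<le> t^2 * (l * (w \<bullet> w) - q w)" for t
    proof -
      have "v + t *\<^sub>R w \<in> V" using vV wV sV by (simp add: subspace_add subspace_scale)
      hence b: "q (v + t *\<^sub>R w) \<le> l * ((v + t *\<^sub>R w) \<bullet> (v + t *\<^sub>R w))" by (rule bound)
      have e1: "q (v + t *\<^sub>R w) = q v + 2 * t * (w \<bullet> (P *v v)) + t^2 * q w"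
        unfolding q_def using sym_inner[OF sym, of v w]
        by (simp add: mv_add mv_scale inner_add_left inner_add_right power2_eq_square algebra_simps inner_commute)
      have e2: "(v + t *\<^sub>R w) \<bullet> (v + t *\<^sub>R w) = 1 + 2 * t * (v \<bullet> w) + t^2 * (w \<bullet> w)"
        using vv by (simp add: inner_add_left inner_add_right power2_eq_square algebra_simps inner_commute)
      have e3: "w \<bullet> (P *v v) - l * (v \<bullet> w) = w \<bullet> w"
        unfolding w_def by (simp add: inner_diff_left inner_diff_right inner_commute algebra_simps)
      have "q v = l" by (simp add: l_def)
      have "q v + 2 * t * (w \<bullet> (P *v v)) + t^2 * q w \<le> l * (1 + 2 * t * (v \<bullet> w) + t^2 * (w \<bullet> w))"
        using b unfolding e1 e2 .
      hence "2 * t * (w \<bullet> (P *v v) - l * (v \<bullet> w)) \<le> t^2 * (l * (w \<bullet> w) - q w)"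
        unfolding \<open>q v = l\<close> by (simp add: algebra_simps)
      with e3 show ?thesis by simp
    qed
    have "w \<bullet> w = 0"
      by (rule quad_lemma[OF ineq]) (use bound[OF wV] in auto)
    hence "w = 0" by simp
    hence Pv: "P *v v = l *\<^sub>R v" unfolding w_def by simp
    have lv: "l = v \<bullet> (P *v v)" using Pv vv by simp
    define V' where "V' = {x\<in>V. v \<bullet> x = 0}"
    have sV': "subspace V'" using sV unfolding V'_def subspace_def
      by (auto simp: inner_add_right)
    have inv': "\<forall>x\<in>V'. P *v x \<in> V'"
    proof
      fix x assume "x \<in> V'"
      hence "x \<in> V" "v \<bullet> x = 0" by (auto simp: V'_def)
      moreover have "v \<bullet> (P *v x) = (P *v v) \<bullet> x" using sym_inner[OF sym] by simp
      ultimately show "P *v x \<in> V'" using inv Pv by (simp add: V'_def)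
    qed
    have "v \<notin> V'" using vv by (simp add: V'_def)
    moreover have "V' \<subseteq> V" by (auto simp: V'_def)
    ultimately have "V' \<subset> V" using vV by blast
    hence "dim V' < dim V" using dim_psubset sV sV' by (metis span_eq_iff)
    then obtain B' where B': "B' \<subseteq> V'" "pairwise orthogonal B'" "\<forall>b\<in>B'. norm b = 1"
       "\<forall>b\<in>B'. P *v b = (b \<bullet> (P *v b)) *\<^sub>R b" "span B' = V'"
      using less.hyps sV' inv' by blast
    show ?thesis
    proof (intro exI[of _ "insert v B'"] conjI)
      show "insert v B' \<subseteq> V" using B'(1) vV by (auto simp: V'_def)
      show "pairwise orthogonal (insert v B')" using B'(1,2)
        by (auto simp: pairwise_insert V'_def orthogonal_def inner_commute)
      show "\<forall>b\<in>insert v B'. norm b = 1" using B'(3) nv by auto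
      show "\<forall>b\<in>insert v B'. P *v b = (b \<bullet> (P *v b)) *\<^sub>R b" using B'(4) Pv lv by auto
      show "span (insert v B') = V"
      proof
        show "span (insert v B') \<subseteq> V" using \<open>insert v B' \<subseteq> V\<close> sV by (simp add: span_minimal)
        show "V \<subseteq> span (insert v B')"
        proof
          fix x assume xV: "x \<in> V"
          have "x - (v \<bullet> x) *\<^sub>R v \<in> V'" using xV vV sV vv
            by (simp add: V'_def subspace_diff subspace_scale inner_diff_right)
          hence "x - (v \<bullet> x) *\<^sub>R v \<in> span B'" using B'(5) by simp
          hence "x - (v \<bullet> x) *\<^sub>R v \<in> span (insert v B')" by (meson span_mono subset_insertI subsetD)
          moreover have "(v \<bullet> x) *\<^sub>R v \<in> span (insert v B')" by (simp add: span_base span_scale)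
          ultimately have "x - (v \<bullet> x) *\<^sub>R v + (v \<bullet> x) *\<^sub>R v \<in> span (insert v B')" by (rule span_add)
          thus "x \<in> span (insert v B')" by simp
        qed
      qed
    qed
  qed
qed

lemma eigen_basis:
  fixes P :: "real^'n^'n"
  assumes sym: "transpose P = P"
  obtains B where "pairwise orthogonal B" "\<forall>b\<in>B. norm b = 1"
     "\<forall>b\<in>B. P *v b = (b \<bullet> (P *v b)) *\<^sub>R b" "span B = UNIV" "finite B"
proof -
  obtain B where B: "pairwise orthogonal B" "\<forall>b\<in>B. norm b = 1"
     "\<forall>b\<in>B. P *v b = (b \<bullet> (P *v b)) *\<^sub>R b" "span B = UNIV"
    using eigen_basis_sub[OF sym, of UNIV] by auto
  have "0 \<notin> B" using B(2) by force
  hence "finite B" using B(1) pairwise_orthogonal_independent independent_imp_finite by blast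
  with B that show ?thesis by blast
qed

lemma expand:
  fixes x :: "real^'n"
  assumes "pairwise orthogonal B" "\<forall>b\<in>B. norm b = 1" "span B = UNIV" "finite B"
  shows "(\<Sum>b\<in>B. (x \<bullet> b) *\<^sub>R b) = x"
  using orthonormal_basis_expand[of B x] assms by auto

lemma orth_inner:
  assumes "pairwise orthogonal B" "\<forall>b\<in>B. norm b = 1" "b \<in> B" "c \<in> B"
  shows "b \<bullet> c = (if c = b then 1 else 0)"
proof (cases "c = b")
  case True
  have "b \<bullet> b = (norm b)^2" by (simp add: power2_norm_eq_inner)
  with assms True show ?thesis by simp
next
  case False
  with assms show ?thesis by (auto simp: pairwise_def orthogonal_def)
qed

lemma mv_sum: "(P::real^'n^'m) *v (\<Sum>b\<in>B. f b) = (\<Sum>b\<in>B. P *v f b)"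
  by (simp add: linear_sum)

lemma sqrt_exists:
  fixes P :: "real^'n^'n"
  assumes pd: "rpd P"
  shows "\<exists>S. rpd S \<and> S ** S = P"
proof -
  have sym: "transpose P = P" using pd by (simp add: rpd_def)
  obtain B where B: "pairwise orthogonal B" "\<forall>b\<in>B. norm b = 1"
     "\<forall>b\<in>B. P *v b = (b \<bullet> (P *v b)) *\<^sub>R b" "span B = UNIV" "finite B"
    using eigen_basis[OF sym] by blast
  define e where "e b = b \<bullet> (P *v b)" for b
  have epos: "e b > 0" if "b \<in> B" for b
  proof -
    have "b \<noteq> 0" using B(2) that by force
    thus ?thesis using pd by (simp add: rpd_def e_def)
  qed
  define g where "g x = (\<Sum>b\<in>B. (sqrt (e b) * (b \<bullet> x)) *\<^sub>R b)" for x
  define S :: "real^'n^'n" where "S = (\<chi> i j. \<Sum>b\<in>B. sqrt (e b) * b$i * b$j)"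
  have Sg: "S *v x = g x" for x
    unfolding S_def g_def matrix_vector_mult_def vec_eq_iff
    by (simp add: inner_vec_def sum_distrib_left sum_distrib_right sum_component mult.assoc mult.left_commute
          flip: sum.swap[of _ B])
       (simp add: mult_ac)
  have bg: "b \<bullet> g x = sqrt (e b) * (b \<bullet> x)" if "b \<in> B" for b x
  proof -
    have "b \<bullet> g x = (\<Sum>c\<in>B. (sqrt (e c) * (c \<bullet> x)) * (b \<bullet> c))"
      by (simp add: g_def inner_sum_right)
    also have "\<dots> = (\<Sum>c\<in>B. if c = b then sqrt (e c) * (c \<bullet> x) else 0)"
      by (rule sum.cong) (auto simp: orth_inner[OF B(1,2) that])
    also have "\<dots> = sqrt (e b) * (b \<bullet> x)" using that B(5) by simp
    finally show ?thesis .
  qed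
  have SS: "S ** S = P"
  proof (subst matrix_eq, intro allI)
    fix x
    have "(S ** S) *v x = g (g x)" by (simp add: Sg flip: matrix_vector_mul_assoc)
    also have "\<dots> = (\<Sum>b\<in>B. (e b * (b \<bullet> x)) *\<^sub>R b)"
      unfolding g_def[of "g x"]
      by (rule sum.cong) (auto simp: bg epos less_imp_le mult.assoc[symmetric])
    also have "\<dots> = P *v x"
    proof -
      have "P *v x = P *v (\<Sum>b\<in>B. (x \<bullet> b) *\<^sub>R b)" using expand[OF B(1,2,4,5)] by simp
      also have "\<dots> = (\<Sum>b\<in>B. (e b * (b \<bullet> x)) *\<^sub>R b)"
        unfolding mv_sum mv_scale
      proof (rule sum.cong[OF refl])
        fix b assume "b \<in> B"
        hence "P *v b = e b *\<^sub>R b" using B(3) unfolding e_def by blast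
        thus "(x \<bullet> b) *\<^sub>R (P *v b) = (e b * (b \<bullet> x)) *\<^sub>R b" by (simp add: inner_commute mult.commute)
      qed
      finally show ?thesis by simp
    qed
    finally show "(S ** S) *v x = P *v x" .
  qed
  have "rpd S"
    unfolding rpd_def
  proof (intro conjI allI impI)
    show "transpose S = S" by (simp add: S_def transpose_def vec_eq_iff mult.commute mult.left_commute)
    fix x :: "real^'n" assume "x \<noteq> 0"
    have "\<exists>b\<in>B. b \<bullet> x \<noteq> 0"
    proof (rule ccontr)
      assume "\<not> ?thesis"
      hence "(\<Sum>b\<in>B. (x \<bullet> b) *\<^sub>R b) = 0" by (simp add: inner_commute)
      with expand[OF B(1,2,4,5)] \<open>x \<noteq> 0\<close> show False by simp
    qed
    then obtain b where b: "b \<in> B" "b \<bullet> x \<noteq> 0" by blast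
    have "x \<bullet> (S *v x) = (\<Sum>c\<in>B. sqrt (e c) * (c \<bullet> x)^2)"
      by (simp add: Sg g_def inner_sum_right power2_eq_square inner_commute mult.assoc)
    also have "\<dots> > 0"
    proof (rule sum_pos2[OF B(5) b(1)])
      show "0 < sqrt (e b) * (b \<bullet> x)^2" using b epos by simp
      show "\<And>c. c \<in> B \<Longrightarrow> 0 \<le> sqrt (e c) * (c \<bullet> x)^2" using epos by (simp add: less_imp_le)
    qed
    finally show "x \<bullet> (S *v x) > 0" .
  qed
  with SS show ?thesis by blast
qed

lemma sqrt_unique:
  fixes S1 S2 :: "real^'n^'n"
  assumes p1: "rpd S1" and p2: "rpd S2" and eq: "S1 ** S1 = S2 ** S2"
  shows "S1 = S2"
proof -
  define D where "D = S1 - S2"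
  have s1: "transpose S1 = S1" and s2: "transpose S2 = S2" using p1 p2 by (auto simp: rpd_def)
  have sD: "transpose D = D" using s1 s2 unfolding D_def by (simp add: transpose_def vec_eq_iff)
  obtain B where B: "pairwise orthogonal B" "\<forall>b\<in>B. norm b = 1"
     "\<forall>b\<in>B. D *v b = (b \<bullet> (D *v b)) *\<^sub>R b" "span B = UNIV" "finite B"
    using eigen_basis[OF sD] by blast
  have Db: "D *v b = 0" if bB: "b \<in> B" for b
  proof -
    define m where "m = b \<bullet> (D *v b)"
    have Dbm: "D *v b = m *\<^sub>R b" using B(3) bB unfolding m_def by blast
    have "b \<noteq> 0" using B(2) bB by force
    hence q1: "b \<bullet> (S1 *v b) > 0" and q2: "b \<bullet> (S2 *v b) > 0" using p1 p2 by (auto simp: rpd_def)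
    have "S1 *v (D *v b) + D *v (S2 *v b) = S1 *v (S1 *v b) - S2 *v (S2 *v b)"
      by (simp add: D_def matrix_vector_mult_diff_rdistrib mv_diff)
    also have "\<dots> = (S1 ** S1) *v b - (S2 ** S2) *v b" by (simp add: matrix_vector_mul_assoc)
    finally have "S1 *v (D *v b) + D *v (S2 *v b) = (S1 ** S1) *v b - (S2 ** S2) *v b" .
    hence z: "S1 *v (D *v b) + D *v (S2 *v b) = 0" using eq by simp
    have "b \<bullet> (D *v (S2 *v b)) = (D *v b) \<bullet> (S2 *v b)" using sym_inner[OF sD] by simp
    hence "0 = m * (b \<bullet> (S1 *v b)) + m * (b \<bullet> (S2 *v b))"
      using arg_cong[OF z, of "\<lambda>y. b \<bullet> y"] Dbm
      by (simp add: inner_add_right mv_scale)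
    hence "m * (b \<bullet> (S1 *v b) + b \<bullet> (S2 *v b)) = 0" by (simp add: algebra_simps)
    hence "m = 0" using q1 q2 by simp
    thus ?thesis using Dbm by simp
  qed
  have "D = 0"
  proof (subst matrix_eq, intro allI)
    fix x
    have "D *v x = D *v (\<Sum>b\<in>B. (x \<bullet> b) *\<^sub>R b)" using expand[OF B(1,2,4,5)] by simp
    also have "\<dots> = 0" unfolding mv_sum mv_scale using Db by simp
    finally show "D *v x = 0 *v x" by simp
  qed
  thus ?thesis unfolding D_def by simp
qed

lemma msqrt_props:
  fixes P :: "real^'n^'n"
  assumes "rpd P"
  shows "rpd (msqrt P) \<and> msqrt P ** msqrt P = P"
proof -
  have "\<exists>!S. rpd S \<and> S ** S = P" using sqrt_exists[OF assms] sqrt_unique by blast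
  thus ?thesis unfolding msqrt_def by (rule theI')
qed

lemma rpd_invertible:
  fixes S :: "real^'n^'n"
  assumes "rpd S"
  shows "invertible S"
proof -
  have "\<forall>x. S *v x = 0 \<longrightarrow> x = 0"
  proof (intro allI impI)
    fix x assume "S *v x = 0"
    hence "x \<bullet> (S *v x) = 0" by simp
    thus "x = 0" using assms unfolding rpd_def by (metis less_irrefl)
  qed
  thus ?thesis using matrix_left_invertible_ker invertible_left_inverse by blast
qed

lemma inv_unique_right:
  fixes A B :: "'a::field^'n^'n"
  assumes "A ** B = mat 1"
  shows "matrix_inv A = B"
proof -
  have BA: "B ** A = mat 1" using assms matrix_left_right_inverse by blast
  have "invertible A" using assms invertible_right_inverse by blast
  hence "A ** matrix_inv A = mat 1 \<and> matrix_inv A ** A = mat 1"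
    unfolding invertible_def matrix_inv_def by (rule someI_ex)
  hence "matrix_inv A = (B ** A) ** matrix_inv A" using BA by (simp add: matrix_mul_lid)
  also have "\<dots> = B" using \<open>A ** matrix_inv A = mat 1 \<and> _\<close>
    by (simp add: matrix_mul_assoc[symmetric] matrix_mul_rid)
  finally show ?thesis .
qed

lemma inv_sqrt_props:
  fixes P :: "real^'n^'n"
  assumes pd: "rpd P"
  defines "S0 \<equiv> msqrt P" and "S \<equiv> inv_sqrt P"
  shows "S0 ** S0 = P" "S ** S0 = mat 1" "S0 ** S = mat 1" "transpose S = S" "transpose S0 = S0"
proof -
  have m: "rpd S0" "S0 ** S0 = P" using msqrt_props[OF pd] by (auto simp: S0_def)
  show "S0 ** S0 = P" by (rule m(2))
  have "invertible S0" by (rule rpd_invertible[OF m(1)])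
  then obtain T where T: "S0 ** T = mat 1" using invertible_def by blast
  have Si: "S = T" unfolding S_def inv_sqrt_def S0_def[symmetric] by (rule inv_unique_right[OF T])
  show S0S: "S0 ** S = mat 1" using T Si by simp
  show SS0: "S ** S0 = mat 1" using S0S matrix_left_right_inverse by blast
  show tS0: "transpose S0 = S0" using m(1) by (simp add: rpd_def)
  have "transpose (S0 ** S) = mat 1" using S0S by simp
  hence "transpose S ** S0 = mat 1" by (simp add: matrix_transpose_mul tS0)
  hence "matrix_inv (transpose S) = S0" by (rule inv_unique_right)
  moreover have "matrix_inv S = S0" using SS0 by (rule inv_unique_right)
  ultimately show "transpose S = S"
    by (metis SS0 S0S inv_unique_right \<open>transpose S ** S0 = mat 1\<close> matrix_left_right_inverse)
qed



lemma cmat_mult: "cmat (A ** B) = cmat A ** cmat B"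
  by (simp add: cmat_def matrix_matrix_mult_def vec_eq_iff)
lemma cmat_add: "cmat (A + B) = cmat A + cmat B"
  by (simp add: cmat_def vec_eq_iff)
lemma cmat_diff: "cmat (A - B) = cmat A - cmat B"
  by (simp add: cmat_def vec_eq_iff)
lemma cmat_one: "cmat (mat 1) = mat 1"
  by (simp add: cmat_def mat_def vec_eq_iff)
lemma cmat_scaleR: "cmat (c *\<^sub>R A) = csc (of_real c) (cmat A)"
  by (simp add: cmat_def csc_def vec_eq_iff)
lemma csc_mult_left: "csc c A ** B = csc c (A ** B)"
  by (simp add: csc_def matrix_matrix_mult_def vec_eq_iff sum_distrib_left mult.assoc)
lemma csc_mult_right: "A ** csc c B = csc c (A ** B)"
  by (simp add: csc_def matrix_matrix_mult_def vec_eq_iff sum_distrib_left mult.left_commute)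
lemma csc_add: "csc c (A + B) = csc c A + csc c B"
  by (simp add: csc_def vec_eq_iff algebra_simps)
lemma csc_diff: "csc c (A - B) = csc c A - csc c B"
  by (simp add: csc_def vec_eq_iff algebra_simps)
lemma csc_neg: "csc c (- A) = - csc c A"
  by (simp add: csc_def vec_eq_iff algebra_simps)
lemma csc_csc: "csc a (csc b A) = csc (a * b) A"
  by (simp add: csc_def vec_eq_iff algebra_simps)
lemma csc_one: "csc 1 A = A"
  by (simp add: csc_def vec_eq_iff)
lemma csc_add_left: "csc (a + b) A = csc a A + csc b A"
  by (simp add: csc_def vec_eq_iff algebra_simps)
lemma csc_diff_left: "csc (a - b) A = csc a A - csc b A"
  by (simp add: csc_def vec_eq_iff algebra_simps)
lemma decomp: "X = cmat (cRe X) + csc \<i> (cmat (cIm X))"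
  by (simp add: cmat_def cRe_def cIm_def csc_def vec_eq_iff complex_eq_iff)

lemma quad_split:
  fixes Q :: "real^'n^'n"
  assumes "transpose Q = Q"
  shows "(\<Sum>i\<in>UNIV. \<Sum>j\<in>UNIV. Q$i$j * (x$i * y$j)) = (\<Sum>i\<in>UNIV. \<Sum>j\<in>UNIV. Q$i$j * (y$i * x$j))"
proof -
  have q: "Q$i$j = Q$j$i" for i j using assms by (metis transpose_def vec_lambda_beta)
  have "(\<Sum>i\<in>UNIV. \<Sum>j\<in>UNIV. Q$i$j * (x$i * y$j)) = (\<Sum>j\<in>UNIV. \<Sum>i\<in>UNIV. Q$i$j * (x$i * y$j))"
    by (rule sum.swap)
  also have "\<dots> = (\<Sum>i\<in>UNIV. \<Sum>j\<in>UNIV. Q$i$j * (y$i * x$j))"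
    by (simp add: q mult.commute)
  finally show ?thesis .
qed

lemma quad_form: "x \<bullet> ((P::real^'n^'n) *v x) = (\<Sum>i\<in>UNIV. \<Sum>j\<in>UNIV. P$i$j * (x$i * x$j))"
  by (simp add: inner_vec_def matrix_vector_mult_def sum_distrib_left mult_ac)

lemma rpd_nonneg: "rpd P \<Longrightarrow> x \<bullet> (P *v x) \<ge> 0"
  by (cases "x = 0") (auto simp: rpd_def less_imp_le)

lemma cinv:
  fixes P Q :: "real^'n^'n"
  assumes pd: "rpd P" and sQ: "transpose Q = Q"
  shows "invertible (cmat P + csc \<i> (cmat Q))"
proof -
  let ?M = "cmat P + csc \<i> (cmat Q)"
  have "\<forall>z. ?M *v z = 0 \<longrightarrow> z = 0"
  proof (intro allI impI)
    fix z :: "complex^'n"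
    assume Mz: "?M *v z = 0"
    define x :: "real^'n" where "x = (\<chi> j. Re (z$j))"
    define y :: "real^'n" where "y = (\<chi> j. Im (z$j))"
    have row: "(\<Sum>j\<in>UNIV. (of_real (P$i$j) + \<i> * of_real (Q$i$j)) * z$j) = 0" for i
      using Mz by (simp add: vec_eq_iff matrix_vector_mult_def cmat_def csc_def)
    have "0 = Re (\<Sum>i\<in>UNIV. cnj (z$i) * (\<Sum>j\<in>UNIV. (of_real (P$i$j) + \<i> * of_real (Q$i$j)) * z$j))"
      by (simp add: row)
    also have "\<dots> = (\<Sum>i\<in>UNIV. \<Sum>j\<in>UNIV. P$i$j * (x$i * x$j) + P$i$j * (y$i * y$j)
                      - Q$i$j * (x$i * y$j) + Q$i$j * (y$i * x$j))"
      by (simp add: sum_distrib_left Re_sum x_def y_def algebra_simps)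
    also have "\<dots> = x \<bullet> (P *v x) + y \<bullet> (P *v y)"
      using quad_split[OF sQ, of x y]
      by (simp add: quad_form sum.distrib sum_subtractf)
    finally have "x \<bullet> (P *v x) + y \<bullet> (P *v y) = 0" by simp
    with rpd_nonneg[OF pd, of x] rpd_nonneg[OF pd, of y]
    have "x \<bullet> (P *v x) = 0" "y \<bullet> (P *v y) = 0" by linarith+
    hence "x = 0" "y = 0" using pd unfolding rpd_def by (metis less_irrefl)+
    thus "z = 0" by (simp add: x_def y_def vec_eq_iff complex_eq_iff)
  qed
  thus ?thesis using matrix_left_invertible_ker invertible_left_inverse by blast
qed



lemma sum_UNIV_Plus: "sum g (UNIV :: ('a::finite + 'b::finite) set) = sum (g \<circ> Inl) UNIV + sum (g \<circ> Inr) UNIV"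
  by (subst UNIV_Plus_UNIV[symmetric], rule sum.Plus) auto



lemma ext_quad:
  fixes Z :: "real^(('t::finite + 'i::finite) + 'r::finite)^(('t + 'i) + 'r)" and x :: "real^'r"
  defines "x' \<equiv> (\<chi> k. case k of Inl _ \<Rightarrow> 0 | Inr r \<Rightarrow> x$r) :: real^(('t + 'i) + 'r)"
  shows "x' \<bullet> (Z *v x') = x \<bullet> (blk idxR idxR Z *v x)"
  unfolding quad_form
  by (simp add: sum_UNIV_Plus[where 'a="'t+'i" and 'b='r] x'_def blk_def idxR_def)

lemma inv_props:
  fixes X :: "'a::field^'n^'n"
  assumes "invertible X"
  shows "X ** matrix_inv X = mat 1" "matrix_inv X ** X = mat 1"
proof -
  have "X ** matrix_inv X = mat 1 \<and> matrix_inv X ** X = mat 1"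
    using assms unfolding invertible_def matrix_inv_def by (rule someI_ex)
  thus "X ** matrix_inv X = mat 1" "matrix_inv X ** X = mat 1" by auto
qed

lemma transpose_inv_sym:
  fixes X :: "'a::field^'n^'n"
  assumes "invertible X" "transpose X = X"
  shows "transpose (matrix_inv X) = matrix_inv X"
proof -
  have "transpose (X ** matrix_inv X) = mat 1" using inv_props(1)[OF assms(1)] by simp
  hence "transpose (matrix_inv X) ** X = mat 1" by (simp add: matrix_transpose_mul assms(2))
  hence "X ** transpose (matrix_inv X) = mat 1" using matrix_left_right_inverse by blast
  thus ?thesis using inv_unique_right by metis
qed

lemma transpose_add: "transpose (A + B) = transpose A + transpose B"
  by (simp add: transpose_def vec_eq_iff)
lemma transpose_diff: "transpose (A - B) = transpose A - (transpose B :: 'a::ab_group_add^_^_)"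
  by (simp add: transpose_def vec_eq_iff)
lemma transpose_cRe: "transpose (cRe X) = cRe (transpose X)"
  by (simp add: transpose_def cRe_def vec_eq_iff)
lemma transpose_cIm: "transpose (cIm X) = cIm (transpose X)"
  by (simp add: transpose_def cIm_def vec_eq_iff)
lemma cRe_blk: "cRe (blk f g Y) = blk f g (cRe Y)"
  by (simp add: blk_def cRe_def vec_eq_iff)

lemma mm_sub_ldistrib: "(A::'a::ring_1^'n^'m) ** (B - C) = A ** B - A ** C"
  by (simp add: matrix_matrix_mult_def vec_eq_iff sum_subtractf algebra_simps)
lemma mm_sub_rdistrib: "((B::'a::ring_1^'n^'m) - C) ** A = B ** A - C ** A"
  by (simp add: matrix_matrix_mult_def vec_eq_iff sum_subtractf algebra_simps)
lemma mm_add_rdistrib: "((B::'a::ring_1^'n^'m) + C) ** A = B ** A + C ** A"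
  by (simp add: matrix_matrix_mult_def vec_eq_iff sum.distrib algebra_simps)
lemma mm_neg_right: "(A::'a::ring_1^'n^'m) ** (- B) = - (A ** B)"
  by (simp add: matrix_matrix_mult_def vec_eq_iff sum_negf)
lemma mm_neg_left: "(- A::'a::ring_1^'n^'m) ** B = - (A ** B)"
  by (simp add: matrix_matrix_mult_def vec_eq_iff sum_negf)
lemma csc_cong: "a = b \<Longrightarrow> X = Z \<Longrightarrow> csc a X = csc b Z" by simp
lemma csc_mat1: "csc c (mat 1) ** X = csc c X"
  by (simp add: csc_mult_left)



theorem proposition1:
  fixes Y :: "complex^(('T::finite + 'I::finite) + 'R::finite)^(('T + 'I) + 'R)"
    and YR :: "real^'R^'R"
    and BI :: "real^'I^'I"
    and Y0 :: real
  defines "YTT \<equiv> blk idxT idxT Y" and "YTI \<equiv> blk idxT idxI Y" and "YTR \<equiv> blk idxT idxR Y"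
    and "YIT \<equiv> blk idxI idxT Y" and "YII \<equiv> blk idxI idxI Y" and "YIR \<equiv> blk idxI idxR Y"
    and "YRT \<equiv> blk idxR idxT Y" and "YRI \<equiv> blk idxR idxI Y" and "YRR \<equiv> blk idxR idxR Y"
  defines "A \<equiv> matrix_inv (cmat YR + YRR)"
  defines "YbII \<equiv> YII - YIR ** A ** YRI"
  defines "YI \<equiv> csc \<i> (cmat BI)"
  defines "S \<equiv> inv_sqrt (cRe YbII)"
  defines "H \<equiv> A ** (- YRT + YRI ** matrix_inv (YI + YbII) ** (YIT - YIR ** A ** YRT))"
  defines "BbI \<equiv> Y0 *\<^sub>R (S ** (BI + cIm YbII) ** S)"
  defines "Theta \<equiv> matrix_inv (csc (complex_of_real Y0) (mat 1) + csc \<i> (cmat BbI))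
                     ** (csc (complex_of_real Y0) (mat 1) - csc \<i> (cmat BbI))"
  defines "YbRT \<equiv> csc (complex_of_real (2 * Y0)) (A ** YRT)"
  defines "YbRI \<equiv> csc (complex_of_real (sqrt 2 * Y0)) (A ** YRI ** cmat S)"
  defines "YbIT \<equiv> csc (complex_of_real (sqrt 2 * Y0)) (cmat S ** (YIT - YIR ** A ** YRT))"
  defines "HbRT \<equiv> csc (complex_of_real (- 1 / (2 * Y0)))
                     (YbRT - csc (complex_of_real (1 / (2 * Y0))) (YbRI ** YbIT))"
  defines "HbRI \<equiv> csc (complex_of_real (- 1 / (2 * Y0))) YbRI"
  defines "HbIT \<equiv> csc (complex_of_real (- 1 / (2 * Y0))) YbIT"
  assumes Ysym: "transpose Y = Y"
    and YRe_pd: "rpd (cRe Y)"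
    and YR_diag: "\<forall>i j. i \<noteq> j \<longrightarrow> YR $ i $ j = 0"
    and YR_pos: "\<forall>i. YR $ i $ i > 0"
    and YbII_pd: "rpd (cRe YbII)"
    and Y0_pos: "Y0 > 0"
    and BI_sym: "transpose BI = BI"
  shows "invertible (cmat YR + YRR) \<and> invertible (YI + YbII) \<and> H = HbRT + HbRI ** Theta ** HbIT"
  proof -
  have tY: "Y $ a $ b = Y $ b $ a" for a b
  proof -
    have "transpose Y $ b $ a = Y $ b $ a" using Ysym by simp
    thus ?thesis by (simp add: transpose_def)
  qed
  have tRR: "transpose YRR = YRR" by (simp add: YRR_def blk_def transpose_def vec_eq_iff tY)
  have tIR: "transpose YIR = YRI" by (simp add: YIR_def YRI_def blk_def transpose_def vec_eq_iff tY)
  have tRI: "transpose YRI = YIR" by (simp add: YIR_def YRI_def blk_def transpose_def vec_eq_iff tY)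
  have tII: "transpose YII = YII" by (simp add: YII_def blk_def transpose_def vec_eq_iff tY)
  define P1 where "P1 = YR + cRe YRR"
  have sYR0: "YR $ a $ b = YR $ b $ a" for a b using YR_diag by (cases "a = b") auto
  have sYR: "transpose YR = YR" by (simp add: transpose_def vec_eq_iff sYR0)
  have pdP1: "rpd P1"
    unfolding rpd_def
  proof (intro conjI allI impI)
    show "transpose P1 = P1" by (simp add: P1_def transpose_add sYR transpose_cRe tRR)
    fix x :: "real^'R" assume "x \<noteq> 0"
    then obtain r where r: "x $ r \<noteq> 0" by (auto simp: vec_eq_iff)
    have "x \<bullet> (YR *v x) = (\<Sum>i\<in>UNIV. YR$i$i * (x$i * x$i))"
      unfolding quad_form
    proof (rule sum.cong[OF refl])
      fix i
      have "(\<Sum>j\<in>UNIV. YR $ i $ j * (x $ i * x $ j)) = (\<Sum>j\<in>UNIV. if j = i then YR $ i $ i * (x $ i * x $ i) else 0)"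
        by (rule sum.cong) (use YR_diag in auto)
      thus "(\<Sum>j\<in>UNIV. YR $ i $ j * (x $ i * x $ j)) = YR $ i $ i * (x $ i * x $ i)" by simp
    qed
    also have "\<dots> > 0"
    proof (rule sum_pos2[of UNIV r])
      have "0 < x $ r * x $ r" using r not_real_square_gt_zero by blast
      thus "0 < YR $ r $ r * (x $ r * x $ r)" using YR_pos by simp
      show "\<And>i. i \<in> UNIV \<Longrightarrow> 0 \<le> YR $ i $ i * (x $ i * x $ i)"
        using YR_pos by (simp add: less_imp_le)
    qed auto
    finally have p: "x \<bullet> (YR *v x) > 0" .
    have "x \<bullet> (cRe YRR *v x) \<ge> 0"
      unfolding YRR_def cRe_blk ext_quad[symmetric] by (rule rpd_nonneg[OF YRe_pd])
    with p show "x \<bullet> (P1 *v x) > 0"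
      by (simp add: P1_def matrix_vector_mult_add_rdistrib inner_add_right)
  qed
  have dRR: "cmat YR + YRR = cmat P1 + csc \<i> (cmat (cIm YRR))"
    using decomp[of YRR] by (simp add: P1_def cmat_add add.assoc)
  have sImRR: "transpose (cIm YRR) = cIm YRR" by (simp add: transpose_cIm tRR)
  have invRR: "invertible (cmat YR + YRR)" unfolding dRR by (rule cinv[OF pdP1 sImRR])
  have tRRc: "transpose (cmat YR + YRR) = cmat YR + YRR"
    by (simp add: transpose_add tRR) (simp add: cmat_def transpose_def vec_eq_iff sYR[unfolded transpose_def vec_eq_iff, simplified])
  have tA: "transpose A = A" unfolding A_def by (rule transpose_inv_sym[OF invRR tRRc])
  have tYbII: "transpose YbII = YbII"
    by (simp add: YbII_def transpose_diff matrix_transpose_mul tA tIR tRI tII matrix_mul_assoc)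
  define R where "R = cRe YbII"
  define K where "K = BI + cIm YbII"
  have sK: "transpose K = K" by (simp add: K_def transpose_add BI_sym transpose_cIm tYbII)
  have dM: "YI + YbII = cmat R + csc \<i> (cmat K)"
    using decomp[of YbII] by (simp add: YI_def R_def K_def cmat_add csc_add)
  have invM: "invertible (YI + YbII)" unfolding dM by (rule cinv[OF YbII_pd[folded R_def] sK])
  define M where "M = YI + YbII"
  define Mi where "Mi = matrix_inv M"
  have MMi: "M ** Mi = mat 1" and MiM: "Mi ** M = mat 1"
    using inv_props[OF invM] by (auto simp: M_def Mi_def)
  define S0 where "S0 = msqrt R"
  have SP: "S0 ** S0 = R" "S ** S0 = mat 1" "S0 ** S = mat 1" "transpose S = S"
    using inv_sqrt_props[OF YbII_pd[folded R_def]] by (auto simp: S0_def S_def R_def)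
  have cSS0: "cmat S ** cmat S0 = mat 1" by (simp add: SP cmat_one flip: cmat_mult)
  have cS0S: "cmat S0 ** cmat S = mat 1" by (simp add: SP cmat_one flip: cmat_mult)
  define T where "T = S ** K ** S"
  have SRS: "S ** R ** S = mat 1"
    by (metis SP(1,2,3) matrix_mul_assoc matrix_mul_rid)
  define N where "N = csc (complex_of_real Y0) (mat 1) + csc \<i> (cmat BbI)"
  have Y0nz: "complex_of_real Y0 \<noteq> 0" using Y0_pos by simp
  have N_eq: "N = csc (complex_of_real Y0) (cmat S ** M ** cmat S)"
  proof -
    have "cmat S ** M ** cmat S = cmat (S ** R ** S) + csc \<i> (cmat T)"
      by (simp add: M_def dM T_def matrix_add_ldistrib mm_add_rdistrib csc_mult_left csc_mult_right cmat_mult)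
    also have "\<dots> = mat 1 + csc \<i> (cmat T)" by (simp add: SRS cmat_one)
    finally have e: "cmat S ** M ** cmat S = mat 1 + csc \<i> (cmat T)" .
    have "BbI = Y0 *\<^sub>R T" by (simp add: BbI_def T_def K_def)
    thus ?thesis unfolding N_def e by (simp add: csc_add cmat_scaleR csc_csc mult.commute)
  qed
  define Ni where "Ni = csc (complex_of_real (1 / Y0)) (cmat S0 ** Mi ** cmat S0)"
  have NNi: "N ** Ni = mat 1"
  proof -
    have "N ** Ni = csc (complex_of_real Y0 * complex_of_real (1 / Y0)) (cmat S ** M ** (cmat S ** cmat S0) ** Mi ** cmat S0)"
      by (simp add: N_eq Ni_def csc_mult_left csc_mult_right csc_csc matrix_mul_assoc)
    also have "\<dots> = cmat S ** (M ** Mi) ** cmat S0"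
      using Y0_pos by (simp add: cSS0 csc_one matrix_mul_assoc flip: of_real_mult)
    also have "\<dots> = mat 1" by (simp add: MMi cSS0)
    finally show ?thesis .
  qed
  have invN: "matrix_inv N = Ni" by (rule inv_unique_right[OF NNi])
  have NiN: "Ni ** N = mat 1" using NNi matrix_left_right_inverse by blast
  have Theta_eq: "Theta = csc (complex_of_real (2 * Y0)) Ni - mat 1"
  proof -
    have "csc (complex_of_real Y0) (mat 1) - csc \<i> (cmat BbI) = csc (complex_of_real (2 * Y0)) (mat 1) - N"
      by (simp add: N_def csc_def vec_eq_iff)
    hence "Theta = Ni ** (csc (complex_of_real (2 * Y0)) (mat 1) - N)"
      by (simp add: Theta_def invN[unfolded N_def])
    thus ?thesis by (simp add: mm_sub_ldistrib NiN csc_mult_right)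
  qed
  have cSNicS: "cmat S ** Ni ** cmat S = csc (complex_of_real (1 / Y0)) Mi"
  proof -
    have "cmat S ** Ni ** cmat S = csc (complex_of_real (1 / Y0)) ((cmat S ** cmat S0) ** Mi ** (cmat S0 ** cmat S))"
      by (simp add: Ni_def csc_mult_left csc_mult_right matrix_mul_assoc)
    thus ?thesis by (simp add: cSS0 cS0S)
  qed
  show ?thesis
  proof (intro conjI)
    show "invertible (cmat YR + YRR)" by (rule invRR)
    show "invertible (YI + YbII)" by (rule invM)
    let ?W = "YIT - YIR ** A ** YRT"
    let ?U = "A ** YRI"
    have Hs: "H = - (A ** YRT) + ?U ** Mi ** ?W"
      by (simp add: H_def Mi_def M_def matrix_add_ldistrib mm_sub_ldistrib mm_neg_right matrix_mul_assoc)
    have sq2: "sqrt 2 * sqrt 2 = (2::real)" by simp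
    have c1: "complex_of_real (- 1 / (2 * Y0)) * complex_of_real (sqrt 2 * Y0) *
              (complex_of_real (- 1 / (2 * Y0)) * complex_of_real (sqrt 2 * Y0)) = 1/2"
    proof -
      have "(- 1 / (2 * Y0)) * (sqrt 2 * Y0) * ((- 1 / (2 * Y0)) * (sqrt 2 * Y0)) = (1/2::real)"
        using Y0_pos sq2 by (simp add: field_simps)
      hence "complex_of_real ((- 1 / (2 * Y0)) * (sqrt 2 * Y0) * ((- 1 / (2 * Y0)) * (sqrt 2 * Y0))) = complex_of_real (1/2)"
        by (rule arg_cong)
      thus ?thesis by (simp only: of_real_mult of_real_divide of_real_1 of_real_numeral)
    qed
    have sc2: "complex_of_real (2 * Y0) / complex_of_real Y0 = 2" using Y0nz by (simp add: field_simps)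
    have HTH: "HbRI ** Theta ** HbIT = ?U ** Mi ** ?W - csc (1/2) (?U ** cmat S ** cmat S ** ?W)"
    proof -
      have "HbRI ** Theta ** HbIT = csc (complex_of_real (- 1 / (2 * Y0)) * complex_of_real (sqrt 2 * Y0) *
              (complex_of_real (- 1 / (2 * Y0)) * complex_of_real (sqrt 2 * Y0)))
              (?U ** cmat S ** Theta ** (cmat S ** ?W))"
        by (simp add: HbRI_def HbIT_def YbRI_def YbIT_def csc_mult_left csc_mult_right csc_csc matrix_mul_assoc mult.assoc)
      also have "\<dots> = csc (1/2) (?U ** cmat S ** Theta ** (cmat S ** ?W))" by (simp only: c1)
      also have "?U ** cmat S ** Theta ** (cmat S ** ?W) =
                 csc (complex_of_real (2 * Y0)) (?U ** (cmat S ** Ni ** cmat S) ** ?W) - ?U ** cmat S ** cmat S ** ?W"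
        by (simp add: Theta_eq mm_sub_ldistrib mm_sub_rdistrib csc_mult_left csc_mult_right matrix_mul_assoc csc_diff)
      also have "\<dots> = csc 2 (?U ** Mi ** ?W) - ?U ** cmat S ** cmat S ** ?W"
        unfolding cSNicS using Y0_pos
        by (simp add: csc_mult_left csc_mult_right csc_csc sc2 flip: of_real_mult)
      finally show ?thesis by (simp add: csc_diff csc_csc csc_one)
    qed
    have HRT: "HbRT = - (A ** YRT) + csc (1/2) (?U ** cmat S ** cmat S ** ?W)"
    proof -
      have e1: "complex_of_real (- 1 / (2 * Y0)) * complex_of_real (2 * Y0) = -1"
        using Y0_pos by (simp flip: of_real_mult)
      have e2: "complex_of_real (- 1 / (2 * Y0)) * (complex_of_real (1 / (2 * Y0)) *
                 (complex_of_real (sqrt 2 * Y0) * complex_of_real (sqrt 2 * Y0))) = - (1/2)"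
      proof -
        have "(- 1 / (2 * Y0)) * ((1 / (2 * Y0)) * ((sqrt 2 * Y0) * (sqrt 2 * Y0))) = - (1/2::real)"
          using Y0_pos sq2 by (simp add: field_simps)
        hence "complex_of_real ((- 1 / (2 * Y0)) * ((1 / (2 * Y0)) * ((sqrt 2 * Y0) * (sqrt 2 * Y0)))) = complex_of_real (- (1/2))"
          by (rule arg_cong)
        thus ?thesis by (simp only: of_real_mult of_real_divide of_real_1 of_real_numeral of_real_minus)
      qed
      have "HbRT = csc (complex_of_real (- 1 / (2 * Y0)) * complex_of_real (2 * Y0)) (A ** YRT)
          - csc (complex_of_real (- 1 / (2 * Y0)) * (complex_of_real (1 / (2 * Y0)) *
                 (complex_of_real (sqrt 2 * Y0) * complex_of_real (sqrt 2 * Y0)))) (?U ** cmat S ** cmat S ** ?W)"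
        by (simp add: HbRT_def YbRT_def YbRI_def YbIT_def csc_diff csc_mult_left csc_mult_right csc_csc matrix_mul_assoc)
      also have "\<dots> = - (A ** YRT) + csc (1/2) (?U ** cmat S ** cmat S ** ?W)"
        unfolding e1 e2 by (simp add: csc_def vec_eq_iff)
      finally show ?thesis .
    qed
    show "H = HbRT + HbRI ** Theta ** HbIT"
      unfolding Hs HRT HTH by simp
  qed
qed

end
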